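(* Let $N\ge 2$, let $q\in\mathbb C$, and let $\Gamma=(\Gamma_{jk})_{j,k=1}^N$ be a symmetric matrix with $\Gamma_{jj}=0$ whose entries are holomorphic functions of $(\lambda_1,\dots,\lambda_N)$ on a domain where the $\lambda_j$ are pairwise distinct. Put $U=\mathrm{diag}(\lambda_1,\dots,\lambda_N)$, $V=\Gamma U-U\Gamma$, and let $E_j$ be the $N\times N$ diagonal matrix with $1$ at position $(j,j)$ and $0$ elsewhere. A vector-valued function $\Phi=(\varphi_1,\dots,\varphi_N)^T$ of $(\lambda,\lambda_1,\dots,\lambda_N)$ satisfies the system $$\frac{\partial\Phi}{\partial\lambda}=-\sum_{j=1}^N\frac{E_j(V+qI)}{\lambda-\lambda_j}\Phi,\qquad \frac{\partial\Phi}{\partial\lambda_j}=\Big(\frac{E_j(V+qI)}{\lambda-\lambda_j}+\Gamma E_j-E_j\Gamma\Big)\Phi\quad(j=1,\dots,N)$$ if and only if, for all $j$, $$\lambda\frac{\partial\varphi_j}{\partial\lambda}+\mathbf E(\varphi_j)=-q\varphi_j,\qquad \frac{\partial\varphi_j}{\partial\lambda}+\mathbf e(\varphi_j)=0,\qquad \frac{\partial\varphi_j}{\partial\lambda_k}=\Gamma_{jk}\varphi_k\ \ (k\neq j),$$ where $\mathbf e=\sum_{k=1}^N\partial_{\lambda_k}$ and $\mathbf E=\sum_{k=1}^N\lambda_k\partial_{\lambda_k}$.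
   Context: All functions are holomorphic in $\lambda\in\mathbb C\setminus\{\lambda_1,\dots,\lambda_N\}$ (locally) and in $(\lambda_1,\dots,\lambda_N)$. *)

theory Defs
  imports "HOL-Analysis.Analysis"
begin

definition upd :: "complex^'n \<Rightarrow> 'n \<Rightarrow> complex \<Rightarrow> complex^'n" where
  "upd m k z = (\<chi> i. if i = k then z else m $ i)"

definition dlam :: "(complex \<Rightarrow> complex^'n \<Rightarrow> complex^'n) \<Rightarrow> complex \<Rightarrow> complex^'n \<Rightarrow> complex^'n" where
  "dlam Phi l m = (\<chi> j. deriv (\<lambda>z. Phi z m $ j) l)"

definition dk :: "(complex \<Rightarrow> complex^'n \<Rightarrow> complex^'n) \<Rightarrow> 'n \<Rightarrow> complex \<Rightarrow> complex^'n \<Rightarrow> complex^'n" where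
  "dk Phi k l m = (\<chi> j. deriv (\<lambda>z. Phi l (upd m k z) $ j) (m $ k))"

text \<open>Holomorphy (in each variable separately, which by Hartogs' theorem is holomorphy) on an open set.\<close>
definition holo_on :: "(complex \<times> (complex^'n)) set \<Rightarrow> (complex \<Rightarrow> complex^'n \<Rightarrow> complex) \<Rightarrow> bool" where
  "holo_on D f \<longleftrightarrow> (\<forall>(l, m) \<in> D. (\<lambda>z. f z m) field_differentiable at l \<and>
      (\<forall>k. (\<lambda>z. f l (upd m k z)) field_differentiable at (m $ k)))"

definition holo_on' :: "(complex^'n) set \<Rightarrow> (complex^'n \<Rightarrow> complex) \<Rightarrow> bool" where
  "holo_on' M g \<longleftrightarrow> (\<forall>m \<in> M. \<forall>k. (\<lambda>z. g (upd m k z)) field_differentiable at (m $ k))"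

definition diagm :: "complex^'n \<Rightarrow> complex^'n^'n" where
  "diagm d = (\<chi> i j. if i = j then d $ i else 0)"

definition Emat :: "'n \<Rightarrow> complex^'n^'n" where
  "Emat j = (\<chi> a b. if a = j \<and> b = j then 1 else 0)"

end

theory Submission
  imports Defs
begin

lemma ifm1: "(if P then x else 0) * (y::'a::semiring_0) = (if P then x*y else 0)" by simp
lemma ifm2: "(y::'a::semiring_0) * (if P then x else 0) = (if P then y*x else 0)" by simp
lemma e1: "((G::complex^'n^'n) ** diagm m)$a$b = G$a$b * m$b"
  by (simp add: matrix_matrix_mult_def diagm_def ifm1 ifm2 sum.delta' cong: if_cong)
lemma e2: "(diagm m ** (G::complex^'n^'n))$a$b = m$a * G$a$b"
  by (simp add: matrix_matrix_mult_def diagm_def ifm1 ifm2 sum.delta cong: if_cong)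
lemma e3: "(Emat j ** (A::complex^'n^'n))$a$b = (if a=j then A$j$b else 0)"
  by (simp add: matrix_matrix_mult_def Emat_def ifm1 ifm2 sum.delta cong: if_cong)
lemma e4: "((A::complex^'n^'n) ** Emat k)$a$b = (if b=k then A$a$k else 0)"
  by (simp add: matrix_matrix_mult_def Emat_def ifm1 ifm2 sum.delta' cong: if_cong)
lemma mv: "((A::complex^'n^'n) *v P)$i = (\<Sum>b\<in>UNIV. A$i$b * P$b)"
  by (simp add: matrix_vector_mult_def)
lemma c1: fixes G :: "complex^'n^'n" and m P :: "complex^'n"
  shows "((Emat j ** ((G ** diagm m - diagm m ** G) + mat q)) *v P) $ i =
     (if i = j then (\<Sum>k\<in>UNIV. G$j$k*(m$k - m$j)*P$k) + q*P$j else 0)"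
  by (simp add: mv e1 e2 e3 mat_def algebra_simps sum.distrib ifm1 ifm2 sum.delta sum.delta' sum_subtractf cong: if_cong)
lemma c2: fixes G :: "complex^'n^'n" and P :: "complex^'n"
  shows "((G ** Emat k - Emat k ** G) *v P) $ j = G$j$k * P$k - (if j = k then (\<Sum>i\<in>UNIV. G$k$i * P$i) else 0)"
  by (simp add: mv e3 e4 algebra_simps sum.distrib ifm1 ifm2 sum.delta sum.delta' sum_subtractf cong: if_cong)

lemma alg: fixes l mj a b W S T q p :: complex
  assumes "l \<noteq> mj" "W = T - mj*S + q*p"
  shows "(a = -(W/(l-mj)) \<and> b = W/(l-mj) - S) \<longleftrightarrow> (l*a + mj*b + T = -q*p \<and> a + b + S = 0)"
proof -
  have n: "l - mj \<noteq> 0" using assms by simp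
  show ?thesis
  proof
    assume h: "a = -(W/(l-mj)) \<and> b = W/(l-mj) - S"
    have a1: "a*(l-mj) = -W" using h n by (simp add: field_simps)
    have b1: "b = -S - a"
    proof -
      have "a+b+S = 0" using h by simp
      then show ?thesis by algebra
    qed
    have "l*a + mj*b + T = a*(l-mj) - mj*S + T" unfolding b1 by (simp add: algebra_simps)
    then show "l*a + mj*b + T = -q*p \<and> a + b + S = 0" using a1 b1 assms(2) by simp
  next
    assume h: "l*a + mj*b + T = -q*p \<and> a + b + S = 0"
    then have "a+b+S = 0" by simp
    then have b: "b = -S - a" by algebra
    with h have "l*a + mj*(-S-a) + T = -q*p" by simp
    then have "a*(l-mj) = -(T - mj*S + q*p)" by (simp add: algebra_simps)
    then have "a*(l-mj) = -W" using assms(2) by simp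
    then have "a = -(W/(l-mj))" using n by (simp add: field_simps)
    then show "a = -(W/(l-mj)) \<and> b = W/(l-mj) - S" using b by simp
  qed
qed

lemma pw:
  fixes G :: "complex^'n^'n" and m P a :: "complex^'n" and B :: "'n \<Rightarrow> complex^'n"
  assumes dist: "\<forall>j. l \<noteq> m$j" and diag: "\<forall>a. G$a$a = 0"
  shows "(a = - (\<Sum>j\<in>UNIV. (1 / (l - m $ j)) *s ((Emat j ** ((G ** diagm m - diagm m ** G) + mat q)) *v P)) \<and>
         (\<forall>j. B j = (1 / (l - m $ j)) *s ((Emat j ** ((G ** diagm m - diagm m ** G) + mat q)) *v P)
                              + (G ** Emat j - Emat j ** G) *v P))
    \<longleftrightarrow> (\<forall>j. l * a$j + (\<Sum>k\<in>UNIV. m$k * B k $ j) = - q * P$j \<and>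
       a$j + (\<Sum>k\<in>UNIV. B k $ j) = 0 \<and>
       (\<forall>k. k \<noteq> j \<longrightarrow> B k $ j = G$j$k * P$k))"
  (is "?L \<longleftrightarrow> ?R")
proof -
  define W where "W j = (\<Sum>k\<in>UNIV. G$j$k*(m$k - m$j)*P$k) + q*P$j" for j
  define S where "S j = (\<Sum>i\<in>UNIV. G$j$i*P$i)" for j
  define T where "T j = (\<Sum>k\<in>UNIV. m$k*(G$j$k*P$k))" for j
  have WST: "W j = T j - m$j * S j + q * P$j" for j
    by (simp add: W_def S_def T_def algebra_simps sum_subtractf sum_distrib_left)
  have L1: "?L \<longleftrightarrow> (\<forall>j. a$j = -(W j/(l-m$j)) \<and> B j $ j = W j/(l-m$j) - S j \<and>
           (\<forall>k. k \<noteq> j \<longrightarrow> B k $ j = G$j$k * P$k))"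
  proof -
    have "?L \<longleftrightarrow> (\<forall>i. a$i = -(W i/(l-m$i))) \<and> (\<forall>k j. B k $ j = (if j = k then W j/(l-m$j) else 0) + (G$j$k*P$k - (if j = k then S j else 0)))"
      apply (simp add: vec_eq_iff sum_component c1 c2 W_def S_def ifm1 ifm2 sum.delta' cong: if_cong)
        done
    also have "\<dots> \<longleftrightarrow> (\<forall>j. a$j = -(W j/(l-m$j)) \<and> B j $ j = W j/(l-m$j) - S j \<and>
           (\<forall>k. k \<noteq> j \<longrightarrow> B k $ j = G$j$k * P$k))"
    proof -
      have e: "(B k $ j = (if j = k then W j/(l-m$j) else 0) + (G$j$k*P$k - (if j = k then S j else 0))) \<longleftrightarrow>
        (if j = k then B j $ j = W j/(l-m$j) - S j else B k $ j = G$j$k*P$k)" for k j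
        using diag by (cases "j = k") simp_all
      show ?thesis unfolding e by auto
    qed
    finally show ?thesis .
  qed
  have sumB: "(\<Sum>k\<in>UNIV. f k * B k $ j) = f j * B j $ j + (\<Sum>k\<in>UNIV. f k * (G$j$k*P$k))"
    if h: "\<forall>k. k \<noteq> j \<longrightarrow> B k $ j = G$j$k * P$k" for j and f :: "'n \<Rightarrow> complex"
  proof -
    have "(\<Sum>k\<in>UNIV. f k * B k $ j) = f j * B j $ j + (\<Sum>k\<in>UNIV-{j}. f k * B k $ j)"
      by (simp add: sum.remove)
    also have "(\<Sum>k\<in>UNIV-{j}. f k * B k $ j) = (\<Sum>k\<in>UNIV-{j}. f k * (G$j$k*P$k))"
      using h by (intro sum.cong) auto
    also have "\<dots> = (\<Sum>k\<in>UNIV. f k * (G$j$k*P$k))"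
      using diag by (simp add: sum.remove[of UNIV j "\<lambda>k. f k * (G$j$k*P$k)"])
    finally show ?thesis .
  qed
  have "?R \<longleftrightarrow> (\<forall>j. (l * a$j + m$j * B j $ j + T j = - q * P$j \<and> a$j + B j $ j + S j = 0) \<and>
       (\<forall>k. k \<noteq> j \<longrightarrow> B k $ j = G$j$k * P$k))"
  proof -
    have "(l * a$j + (\<Sum>k\<in>UNIV. m$k * B k $ j) = - q * P$j \<and>
       a$j + (\<Sum>k\<in>UNIV. B k $ j) = 0 \<and>
       (\<forall>k. k \<noteq> j \<longrightarrow> B k $ j = G$j$k * P$k)) \<longleftrightarrow>
       ((l * a$j + m$j * B j $ j + T j = - q * P$j \<and> a$j + B j $ j + S j = 0) \<and>
       (\<forall>k. k \<noteq> j \<longrightarrow> B k $ j = G$j$k * P$k))" for j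
    proof (cases "\<forall>k. k \<noteq> j \<longrightarrow> B k $ j = G$j$k * P$k")
      case True
      have s1: "(\<Sum>k\<in>UNIV. m$k * B k $ j) = m$j * B j $ j + T j"
        using sumB[OF True, of "\<lambda>k. m$k"] by (simp add: T_def)
      have s2: "(\<Sum>k\<in>UNIV. B k $ j) = B j $ j + S j"
        using sumB[OF True, of "\<lambda>k. 1"] by (simp add: S_def)
      show ?thesis using True s1 s2 by (simp add: add.assoc)
    qed auto
    then show ?thesis by (intro iff_allI)
  qed
  also have "\<dots> \<longleftrightarrow> (\<forall>j. (a$j = -(W j/(l-m$j)) \<and> B j $ j = W j/(l-m$j) - S j) \<and>
           (\<forall>k. k \<noteq> j \<longrightarrow> B k $ j = G$j$k * P$k))"
  proof -
    have "(l * a$j + m$j * B j $ j + T j = - q * P$j \<and> a$j + B j $ j + S j = 0) \<longleftrightarrow>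
      (a$j = -(W j/(l-m$j)) \<and> B j $ j = W j/(l-m$j) - S j)" for j
      using alg[where l=l and mj="m$j" and a="a$j" and b="B j $ j" and W="W j" and S="S j" and T="T j" and q=q and p="P$j", OF _ WST] dist
      by simp
    note hj = this
    show ?thesis by (rule iff_allI, rule conj_cong, rule hj, rule refl)
  qed
  finally show ?thesis using L1 by (simp only: conj_assoc)
qed
theorem mainTheorem1:
  fixes D :: "(complex \<times> (complex^'n)) set"
    and q :: complex
    and Gam :: "complex^'n \<Rightarrow> complex^'n^'n"
    and Phi :: "complex \<Rightarrow> complex^'n \<Rightarrow> complex^'n"
  assumes N2: "CARD('n) \<ge> 2"
    and D_open: "open D" and D_conn: "connected D"
    and D_dist: "\<forall>(l, m) \<in> D. (\<forall>j. l \<noteq> m $ j) \<and> (\<forall>j k. j \<noteq> k \<longrightarrow> m $ j \<noteq> m $ k)"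
    and Gam_holo: "\<forall>a b. holo_on' (snd ` D) (\<lambda>m. Gam m $ a $ b)"
    and Gam_sym: "\<forall>m\<in>snd ` D. \<forall>a b. Gam m $ a $ b = Gam m $ b $ a"
    and Gam_diag: "\<forall>m\<in>snd ` D. \<forall>a. Gam m $ a $ a = 0"
    and Phi_holo: "\<forall>j. holo_on D (\<lambda>l m. Phi l m $ j)"
  shows
   "(\<forall>(l, m) \<in> D.
       (let U = diagm m; G = Gam m; V = G ** U - U ** G in
         dlam Phi l m = - (\<Sum>j\<in>UNIV. (1 / (l - m $ j)) *s ((Emat j ** (V + mat q)) *v Phi l m)) \<and>
         (\<forall>j. dk Phi j l m = (1 / (l - m $ j)) *s ((Emat j ** (V + mat q)) *v Phi l m)
                              + (G ** Emat j - Emat j ** G) *v Phi l m)))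
    \<longleftrightarrow>
    (\<forall>(l, m) \<in> D. \<forall>j.
       l * dlam Phi l m $ j + (\<Sum>k\<in>UNIV. m $ k * dk Phi k l m $ j) = - q * Phi l m $ j \<and>
       dlam Phi l m $ j + (\<Sum>k\<in>UNIV. dk Phi k l m $ j) = 0 \<and>
       (\<forall>k. k \<noteq> j \<longrightarrow> dk Phi k l m $ j = Gam m $ j $ k * Phi l m $ k))"
proof (rule ball_cong[OF refl])
  fix x assume xD: "x \<in> D"
  obtain l m where x: "x = (l, m)" by (cases x)
  have lm: "(l, m) \<in> D" using xD x by simp
  have dist: "\<forall>j. l \<noteq> m$j" using D_dist lm by auto
  have ms: "m \<in> snd ` D" using lm by force
  have diag: "\<forall>a. Gam m $a$a = 0" using Gam_diag ms by auto
  show "(case x of (l, m) \<Rightarrow>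
       (let U = diagm m; G = Gam m; V = G ** U - U ** G in
         dlam Phi l m = - (\<Sum>j\<in>UNIV. (1 / (l - m $ j)) *s ((Emat j ** (V + mat q)) *v Phi l m)) \<and>
         (\<forall>j. dk Phi j l m = (1 / (l - m $ j)) *s ((Emat j ** (V + mat q)) *v Phi l m)
                              + (G ** Emat j - Emat j ** G) *v Phi l m))) \<longleftrightarrow>
    (case x of (l, m) \<Rightarrow> \<forall>j.
       l * dlam Phi l m $ j + (\<Sum>k\<in>UNIV. m $ k * dk Phi k l m $ j) = - q * Phi l m $ j \<and>
       dlam Phi l m $ j + (\<Sum>k\<in>UNIV. dk Phi k l m $ j) = 0 \<and>
       (\<forall>k. k \<noteq> j \<longrightarrow> dk Phi k l m $ j = Gam m $ j $ k * Phi l m $ k))"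
    unfolding x prod.case Let_def
    using pw[where G="Gam m" and m=m and P="Phi l m" and a="dlam Phi l m" and B="\<lambda>k. dk Phi k l m" and l=l and q=q, OF dist diag]
    by simp
qed

end
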